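(* Let $1<\theta<e^3$ with $\log\theta$ irrational, and let $a_k,B_k,\lambda_k$ be associated to the simple continued fraction of $2/\log\theta$. For each $n\in\mathcal A_\theta$ there exist positive integers $c,k$ such that $n=cB_{2k-1}$ and $\lambda_{2k}>\frac{6c^2}{\log\theta}$.
   Context: $\log$ is the natural logarithm; $M'_\theta(n)=\left\lfloor 1/(\theta^{1/n}-1)\right\rfloor$ and $\mathcal A_\theta=\{n\in\mathbb N: M'_\theta(n)\neq \lfloor n/\log\theta-1/2\rfloor\}$. For an irrational $\alpha=[a_0;a_1,a_2,\dots]$ (simple continued fraction, $a_0\in\mathbb Z$, $a_k\ge1$ for $k\ge1$), $A_k/B_k=[a_0;a_1,\dots,a_k]$ is the $k$th convergent in lowest terms with $B_k>0$, and $\lambda_k=[0;a_{k-1},a_{k-2},\dots,a_1]+[a_k;a_{k+1},a_{k+2},\dots]$. *)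

theory Defs
  imports Complex_Main
begin

text \<open>Complete quotients of the simple continued fraction of a real alpha:
  alpha_0 = alpha, alpha_(k+1) = 1 / frac(alpha_k).  For irrational alpha these are
  exactly the tails [a_k; a_(k+1), ...].\<close>
fun cf_rest :: "real \<Rightarrow> nat \<Rightarrow> real" where
  "cf_rest x 0 = x"
| "cf_rest x (Suc k) = 1 / frac (cf_rest x k)"

definition cf_a :: "real \<Rightarrow> nat \<Rightarrow> int" where
  "cf_a x k = \<lfloor>cf_rest x k\<rfloor>"

fun cf_val :: "int list \<Rightarrow> 'a::field" where
  "cf_val [] = 0"
| "cf_val [x] = of_int x"
| "cf_val (x # y # ys) = of_int x + 1 / cf_val (y # ys)"

definition cf_B :: "real \<Rightarrow> nat \<Rightarrow> int" where
  "cf_B x k = snd (quotient_of (cf_val (map (cf_a x) [0..<Suc k]) :: rat))"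

definition cf_lambda :: "real \<Rightarrow> nat \<Rightarrow> real" where
  "cf_lambda x k = cf_val (0 # map (cf_a x) (rev [1..<k])) + cf_rest x k"

definition M' :: "real \<Rightarrow> nat \<Rightarrow> int" where
  "M' \<theta> n = \<lfloor>1 / (\<theta> powr (1 / real n) - 1)\<rfloor>"

definition A_set :: "real \<Rightarrow> nat set" where
  "A_set \<theta> = {n. n \<ge> 1 \<and> M' \<theta> n \<noteq> \<lfloor>real n / ln \<theta> - 1/2\<rfloor>}"

end

theory Submission
  imports Defs
begin


fun pp :: "(nat \<Rightarrow> int) \<Rightarrow> nat \<Rightarrow> int" where
  "pp b 0 = 0"
| "pp b (Suc 0) = 1"
| "pp b (Suc (Suc n)) = b n * pp b (Suc n) + pp b n"

fun qq :: "(nat \<Rightarrow> int) \<Rightarrow> nat \<Rightarrow> int" where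
  "qq b 0 = 1"
| "qq b (Suc 0) = 0"
| "qq b (Suc (Suc n)) = b n * qq b (Suc n) + qq b n"

fun cfg :: "'a::field list \<Rightarrow> 'a" where
  "cfg [] = 0"
| "cfg [x] = x"
| "cfg (x # y # ys) = x + 1 / cfg (y # ys)"

lemma gen_aux: "(t::'a::field) \<noteq> 0 \<Longrightarrow> (c + 1 / t) * X + Y = (t * (c * X + Y) + X) / t"
  by (simp add: add_divide_distrib distrib_right)
lemma gen2_aux: "(t::'a::field) \<noteq> 0 \<Longrightarrow> (A/t)/(B/t) = A/B"
  by simp

lemma cf_val_cfg: "(cf_val l :: 'a::field) = cfg (map of_int l)"
  by (induction l rule: cf_val.induct) auto

lemma cfg_Cons: "ys \<noteq> [] \<Longrightarrow> cfg (z # ys) = z + 1 / cfg ys"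
  by (cases ys) auto

lemma cfg_snoc2: "cfg (xs @ [x, y]) = cfg (xs @ [x + 1 / y])"
proof (induction xs)
  case Nil
  then show ?case by simp
next
  case (Cons z xs)
  have "cfg ((z # xs) @ [x, y]) = z + 1 / cfg (xs @ [x, y])"
    by (simp add: cfg_Cons)
  also have "\<dots> = z + 1 / cfg (xs @ [x + 1 / y])" using Cons by simp
  also have "\<dots> = cfg ((z # xs) @ [x + 1 / y])" by (simp add: cfg_Cons)
  finally show ?case .
qed

lemma det_pq: "pp b (Suc n) * qq b n - pp b n * qq b (Suc n) = (-1) ^ n"
proof (induction n)
  case 0
  then show ?case by simp
next
  case (Suc n)
  then show ?case by (simp add: algebra_simps)
qed

lemma cfg_formula:
  fixes t :: "'a::linordered_field"
  assumes pos: "\<And>i. i > 0 \<Longrightarrow> b i \<ge> 1"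
  shows "(t > 0 \<or> k = 0) \<Longrightarrow> cfg (map (of_int \<circ> b) [0..<k] @ [t])
     = (t * of_int (pp b (Suc k)) + of_int (pp b k)) / (t * of_int (qq b (Suc k)) + of_int (qq b k))"
proof (induction k arbitrary: t)
  case 0
  then show ?case by simp
next
  case (Suc k)
  then have t: "t > 0" by simp
  define t' where "t' = of_int (b k) + 1 / t"
  have t'pos: "t' > 0 \<or> k = 0"
  proof (cases "k = 0")
    case False
    then have "(of_int (b k)::'a) \<ge> 1" using pos by simp
    then show ?thesis
    proof -
      have "1 / t > 0" using t by simp
      then show ?thesis using \<open>(of_int (b k)::'a) \<ge> 1\<close> unfolding t'_def by linarith
    qed
  qed simp
  have "map (of_int \<circ> b) [0..<Suc k] @ [t] = map (of_int \<circ> b) [0..<k] @ [of_int (b k), t]"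
    by simp
  then have "cfg (map (of_int \<circ> b) [0..<Suc k] @ [t]) = cfg (map (of_int \<circ> b) [0..<k] @ [of_int (b k), t])"
    by (simp only:)
  also have "\<dots> = cfg (map (of_int \<circ> b) [0..<k] @ [t'])"
    unfolding t'_def by (rule cfg_snoc2)
  also have "\<dots> = (t' * of_int (pp b (Suc k)) + of_int (pp b k)) / (t' * of_int (qq b (Suc k)) + of_int (qq b k))"
    using Suc.IH t'pos by blast
  also have "\<dots> = (t * of_int (pp b (Suc (Suc k))) + of_int (pp b (Suc k))) / (t * of_int (qq b (Suc (Suc k))) + of_int (qq b (Suc k)))"
  proof -
    have tn: "t \<noteq> 0" using t by simp
    have gen: "\<And>(X::'a) Y. (of_int (b k) + 1 / t) * X + Y = (t * (of_int (b k) * X + Y) + X) / t"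
      using tn by (rule gen_aux)
    have e1: "(t' * of_int (pp b (Suc k)) + of_int (pp b k)) = (t * of_int (pp b (Suc (Suc k))) + of_int (pp b (Suc k))) / t"
      unfolding t'_def gen by (simp only: pp.simps qq.simps of_int_add of_int_mult)
    have e2: "(t' * of_int (qq b (Suc k)) + of_int (qq b k)) = (t * of_int (qq b (Suc (Suc k))) + of_int (qq b (Suc k))) / t"
      unfolding t'_def gen by (simp only: pp.simps qq.simps of_int_add of_int_mult)
    have gen2: "\<And>A B::'a. (A/t)/(B/t) = A/B" using tn by (rule gen2_aux)
    show ?thesis unfolding e1 e2 gen2 ..
  qed
  finally show ?case .
qed

lemma qq_rec: "qq b (Suc (Suc n)) = b n * qq b (Suc n) + qq b n" by simp
lemma pp_rec: "pp b (Suc (Suc n)) = b n * pp b (Suc n) + pp b n" by simp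

declare qq.simps(3)[simp del] pp.simps(3)[simp del]

lemma qq_pos:
  assumes pos: "\<And>i. i > 0 \<Longrightarrow> b i \<ge> 1"
  shows "qq b (Suc (Suc n)) \<ge> 1 \<and> qq b (Suc n) \<ge> 0"
proof (induction n)
  case 0
  then show ?case by (simp add: qq_rec)
next
  case (Suc n)
  have "b (Suc n) \<ge> 1" using pos by simp
  moreover have "qq b (Suc (Suc n)) \<ge> 1" using Suc by simp
  ultimately have "b (Suc n) * qq b (Suc (Suc n)) \<ge> 1 * 1"
    by (intro mult_mono) auto
  then show ?case using Suc qq_rec[of b "Suc n"] by simp
qed

lemma qq_pos1: "(\<And>i. i > 0 \<Longrightarrow> b i \<ge> 1) \<Longrightarrow> qq b (Suc (Suc n)) \<ge> 1"
  using qq_pos by blast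
lemma qq_nonneg: "(\<And>i. i > 0 \<Longrightarrow> b i \<ge> 1) \<Longrightarrow> qq b (Suc n) \<ge> 0"
  using qq_pos by blast

lemma qq_mono:
  assumes pos: "\<And>i. i > 0 \<Longrightarrow> b i \<ge> 1"
  shows "qq b (Suc (Suc (Suc n))) \<ge> qq b (Suc (Suc n))"
proof -
  have b: "b (Suc n) \<ge> 1" using pos by simp
  have q: "qq b (Suc (Suc n)) \<ge> 1" "qq b (Suc n) \<ge> 0"
    using qq_pos1[OF pos] qq_nonneg[OF pos] by auto
  have "b (Suc n) * qq b (Suc (Suc n)) \<ge> 1 * qq b (Suc (Suc n))"
    using b q by (intro mult_mono) auto
  then show ?thesis using q qq_rec[of b "Suc n"] by linarith
qed

lemma qq_grow:
  assumes pos: "\<And>i. i > 0 \<Longrightarrow> b i \<ge> 1"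
  shows "qq b (Suc (Suc (Suc n))) \<ge> int n + 1"
proof (induction n)
  case 0
  have "qq b (Suc (Suc (Suc 0))) = b 1" by (simp add: qq_rec)
  moreover have "b 1 \<ge> 1" by (rule pos) simp
  ultimately show ?case by simp
next
  case (Suc n)
  have "qq b (Suc (Suc (Suc (Suc n)))) \<ge> qq b (Suc (Suc (Suc n))) + qq b (Suc (Suc n))"
  proof -
    have b: "b (Suc (Suc n)) \<ge> 1" by (rule pos) simp
    have q: "qq b (Suc (Suc (Suc n))) \<ge> 1" by (rule qq_pos1[OF pos])
    have "b (Suc (Suc n)) * qq b (Suc (Suc (Suc n))) \<ge> 1 * qq b (Suc (Suc (Suc n)))"
      using b q by (intro mult_mono) auto
    then show ?thesis using qq_rec[of b "Suc (Suc n)"] by linarith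
  qed
  moreover have "qq b (Suc (Suc n)) \<ge> 1" by (rule qq_pos1[OF pos])
  ultimately show ?case using Suc.IH by linarith
qed



lemma cf_rest_irrat: "x \<notin> \<rat> \<Longrightarrow> cf_rest x k \<notin> \<rat>"
proof (induction k)
  case 0
  then show ?case by simp
next
  case (Suc k)
  show ?case
  proof
    assume "cf_rest x (Suc k) \<in> \<rat>"
    then have "1 / frac (cf_rest x k) \<in> \<rat>" by simp
    then have "1 / (1 / frac (cf_rest x k)) \<in> \<rat>" by (rule Rats_divide[OF Rats_1])
    then have "frac (cf_rest x k) \<in> \<rat>" by simp
    then have "frac (cf_rest x k) + of_int \<lfloor>cf_rest x k\<rfloor> \<in> \<rat>" by (intro Rats_add) auto
    then have "cf_rest x k \<in> \<rat>" by (simp add: frac_def)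
    then show False using Suc by simp
  qed
qed

lemma cf_rest_gt1: "x \<notin> \<rat> \<Longrightarrow> 0 < k \<Longrightarrow> cf_rest x k > 1"
proof (cases k)
  case (Suc m)
  assume x: "x \<notin> \<rat>"
  have "cf_rest x m \<notin> \<rat>" using cf_rest_irrat[OF x] .
  then have "cf_rest x m \<notin> \<int>" using Ints_subset_Rats by blast
  then have "frac (cf_rest x m) \<noteq> 0" by (simp add: frac_eq_0_iff)
  moreover have "frac (cf_rest x m) \<ge> 0" "frac (cf_rest x m) < 1" by (auto simp: frac_lt_1)
  ultimately have "0 < frac (cf_rest x m)" "frac (cf_rest x m) < 1" by auto
  then have "1 / frac (cf_rest x m) > 1" by simp
  then show ?thesis using Suc by simp
qed simp

lemma cf_a_pos: "x \<notin> \<rat> \<Longrightarrow> 0 < k \<Longrightarrow> cf_a x k \<ge> 1"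
  using cf_rest_gt1[of x k] unfolding cf_a_def by linarith

lemma cf_expand: "cfg (map (of_int \<circ> cf_a x) [0..<k] @ [cf_rest x k]) = x"
proof (induction k)
  case 0
  then show ?case by simp
next
  case (Suc k)
  have "map (of_int \<circ> cf_a x) [0..<Suc k] @ [cf_rest x (Suc k)]
      = map (of_int \<circ> cf_a x) [0..<k] @ [of_int (cf_a x k), cf_rest x (Suc k)]" by simp
  then have "cfg (map (of_int \<circ> cf_a x) [0..<Suc k] @ [cf_rest x (Suc k)])
      = cfg (map (of_int \<circ> cf_a x) [0..<k] @ [of_int (cf_a x k), cf_rest x (Suc k)])" by (simp only:)
  also have "\<dots> = cfg (map (of_int \<circ> cf_a x) [0..<k] @ [of_int (cf_a x k) + 1 / cf_rest x (Suc k)])"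
    by (rule cfg_snoc2)
  also have "of_int (cf_a x k) + 1 / cf_rest x (Suc k) = cf_rest x k"
    by (simp add: cf_a_def frac_def)
  finally show ?case using Suc.IH by simp
qed

lemma alpha_formula:
  assumes x: "x \<notin> \<rat>"
  shows "x = (cf_rest x k * of_int (pp (cf_a x) (Suc k)) + of_int (pp (cf_a x) k)) /
             (cf_rest x k * of_int (qq (cf_a x) (Suc k)) + of_int (qq (cf_a x) k))"
proof -
  have "cfg (map (of_int \<circ> cf_a x) [0..<k] @ [cf_rest x k]) =
     (cf_rest x k * of_int (pp (cf_a x) (Suc k)) + of_int (pp (cf_a x) k)) /
             (cf_rest x k * of_int (qq (cf_a x) (Suc k)) + of_int (qq (cf_a x) k))"
    by (rule cfg_formula) (use cf_a_pos[OF x] cf_rest_gt1[OF x, of k] in auto)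
  then show ?thesis using cf_expand[of x k] by simp
qed

lemma conv_formula:
  assumes x: "x \<notin> \<rat>"
  shows "(cf_val (map (cf_a x) [0..<Suc k]) :: 'a::linordered_field)
       = of_int (pp (cf_a x) (Suc (Suc k))) / of_int (qq (cf_a x) (Suc (Suc k)))"
proof -
  have "(cf_val (map (cf_a x) [0..<Suc k]) :: 'a) = cfg (map (of_int \<circ> cf_a x) [0..<k] @ [of_int (cf_a x k)])"
    by (simp add: cf_val_cfg)
  also have "\<dots> = (of_int (cf_a x k) * of_int (pp (cf_a x) (Suc k)) + of_int (pp (cf_a x) k)) /
             (of_int (cf_a x k) * of_int (qq (cf_a x) (Suc k)) + of_int (qq (cf_a x) k))"
  proof (rule cfg_formula)
    show "\<And>i. 0 < i \<Longrightarrow> 1 \<le> cf_a x i" using cf_a_pos[OF x] by blast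
    show "(0::'a) < of_int (cf_a x k) \<or> k = 0"
      using cf_a_pos[OF x, of k] by (cases "k = 0") auto
  qed
  also have "\<dots> = of_int (pp (cf_a x) (Suc (Suc k))) / of_int (qq (cf_a x) (Suc (Suc k)))"
    by (simp add: pp_rec qq_rec)
  finally show ?thesis .
qed

lemma coprime_pq: "coprime (pp b (Suc n)) (qq b (Suc n))"
proof -
  have "pp b (Suc (Suc n)) * qq b (Suc n) - pp b (Suc n) * qq b (Suc (Suc n)) = (-1) ^ Suc n"
    by (rule det_pq)
  then have "gcd (pp b (Suc n)) (qq b (Suc n)) dvd (-1) ^ Suc n"
    by (metis dvd_diff dvd_mult gcd_dvd1 gcd_dvd2 mult.commute)
  moreover have "is_unit ((-1::int) ^ Suc n)" by simp
  ultimately have "gcd (pp b (Suc n)) (qq b (Suc n)) dvd 1"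
    using dvd_unit_imp_unit by blast
  then show ?thesis by (simp add: coprime_iff_gcd_eq_1)
qed

lemma frac_unique:
  fixes a b P Q :: int
  assumes "coprime a b" "b > 0" "coprime P Q" "Q > 0" "a * Q = P * b"
  shows "b = Q"
proof -
  have "b dvd a * Q" using assms(5) by simp
  then have "b dvd Q" using assms(1) by (metis coprime_commute coprime_dvd_mult_right_iff)
  moreover have "Q dvd P * b" using assms(5) by (metis dvd_triv_right)
  then have "Q dvd b" using assms(3) by (metis coprime_commute coprime_dvd_mult_right_iff)
  ultimately show ?thesis using assms(2,4) by (simp add: zdvd_antisym_nonneg)
qed

lemma cf_B_eq:
  assumes x: "x \<notin> \<rat>"
  shows "cf_B x k = qq (cf_a x) (Suc (Suc k))"
proof -
  obtain a b where ab: "quotient_of (cf_val (map (cf_a x) [0..<Suc k]) :: rat) = (a, b)"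
    by (cases "quotient_of (cf_val (map (cf_a x) [0..<Suc k]) :: rat)") auto
  have Qpos: "qq (cf_a x) (Suc (Suc k)) > 0"
    using qq_pos1[of "cf_a x" k] cf_a_pos[OF x] by fastforce
  have "(of_int a / of_int b :: rat) = of_int (pp (cf_a x) (Suc (Suc k))) / of_int (qq (cf_a x) (Suc (Suc k)))"
    using quotient_of_div[OF ab] conv_formula[OF x, of k, where 'a=rat] by simp
  moreover have bpos: "b > 0" using quotient_of_denom_pos[OF ab] .
  ultimately have "(of_int (a * qq (cf_a x) (Suc (Suc k))) :: rat) = of_int (pp (cf_a x) (Suc (Suc k)) * b)"
    using Qpos by (simp add: field_simps)
  then have "a * qq (cf_a x) (Suc (Suc k)) = pp (cf_a x) (Suc (Suc k)) * b"
    using of_int_eq_iff by blast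
  then have "b = qq (cf_a x) (Suc (Suc k))"
    using frac_unique[OF quotient_of_coprime[OF ab] bpos coprime_pq Qpos] by simp
  then show ?thesis unfolding cf_B_def ab by simp
qed



declare cf_rest.simps(2)[simp del]

lemma Qpos: "x \<notin> \<rat> \<Longrightarrow> qq (cf_a x) (Suc (Suc n)) \<ge> 1"
  by (rule qq_pos1) (use cf_a_pos in blast)
lemma Qnonneg: "x \<notin> \<rat> \<Longrightarrow> qq (cf_a x) (Suc n) \<ge> 0"
  by (rule qq_nonneg) (use cf_a_pos in blast)

definition DD :: "real \<Rightarrow> nat \<Rightarrow> real" where
  "DD x j = cf_rest x (Suc j) * of_int (qq (cf_a x) (Suc (Suc j))) + of_int (qq (cf_a x) (Suc j))"

lemma DD_pos: "x \<notin> \<rat> \<Longrightarrow> DD x j > 0"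
proof -
  assume x: "x \<notin> \<rat>"
  have "cf_rest x (Suc j) > 1" using cf_rest_gt1[OF x, of "Suc j"] by blast
  moreover have "real_of_int (qq (cf_a x) (Suc (Suc j))) \<ge> 1" using Qpos[OF x, of j] by simp
  ultimately have "cf_rest x (Suc j) * of_int (qq (cf_a x) (Suc (Suc j))) > 0" by simp
  moreover have "real_of_int (qq (cf_a x) (Suc j)) \<ge> 0" using Qnonneg[OF x, of j] by simp
  ultimately show ?thesis unfolding DD_def by linarith
qed

lemma err_formula:
  assumes x: "x \<notin> \<rat>"
  shows "of_int (qq (cf_a x) (Suc (Suc j))) * x - of_int (pp (cf_a x) (Suc (Suc j))) = (-1) ^ j / DD x j"
proof -
  define r where "r = cf_rest x (Suc j)"
  define P where "P = real_of_int (pp (cf_a x) (Suc (Suc j)))"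
  define Q where "Q = real_of_int (qq (cf_a x) (Suc (Suc j)))"
  define P' where "P' = real_of_int (pp (cf_a x) (Suc j))"
  define Q' where "Q' = real_of_int (qq (cf_a x) (Suc j))"
  have D: "DD x j = r * Q + Q'" unfolding DD_def r_def Q_def Q'_def by simp
  have Dpos: "r * Q + Q' > 0" using DD_pos[OF x, of j] D by simp
  have xe: "x = (r * P + P') / (r * Q + Q')"
    using alpha_formula[OF x, of "Suc j"] unfolding r_def P_def Q_def P'_def Q'_def by simp
  have det: "P * Q' - P' * Q = (-1) ^ Suc j"
  proof -
    have "real_of_int (pp (cf_a x) (Suc (Suc j)) * qq (cf_a x) (Suc j) - pp (cf_a x) (Suc j) * qq (cf_a x) (Suc (Suc j))) = real_of_int ((-1) ^ Suc j)"
      using det_pq[of "cf_a x" "Suc j"] by presburger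
    then show ?thesis unfolding P_def Q_def P'_def Q'_def by simp
  qed
  have "Q * x - P = (Q * (r * P + P') - P * (r * Q + Q')) / (r * Q + Q')"
    using Dpos unfolding xe by (simp add: field_simps)
  also have "Q * (r * P + P') - P * (r * Q + Q') = -(P * Q' - P' * Q)" by (simp add: algebra_simps)
  also have "\<dots> = (-1) ^ j" using det by simp
  finally show ?thesis unfolding D P_def Q_def by simp
qed

lemma cf_val_cons0: "(cf_val (c # L) :: real) = of_int c + cf_val (0 # L)"
  by (cases L) auto

lemma lambda_part:
  assumes x: "x \<notin> \<rat>"
  shows "(cf_val (0 # map (cf_a x) (rev [1..<Suc j])) :: real)
     = of_int (qq (cf_a x) (Suc j)) / of_int (qq (cf_a x) (Suc (Suc j)))"
proof (induction j)
  case 0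
  then show ?case by (simp add: qq_rec)
next
  case (Suc j)
  have L: "rev [1..<Suc (Suc j)] = Suc j # rev [1..<Suc j]" by simp
  have Q: "real_of_int (qq (cf_a x) (Suc (Suc j))) \<ge> 1" using Qpos[OF x, of j] by simp
  have "(cf_val (0 # map (cf_a x) (rev [1..<Suc (Suc j)])) :: real)
      = 1 / cf_val (cf_a x (Suc j) # map (cf_a x) (rev [1..<Suc j]))"
    unfolding L by simp
  also have "(cf_val (cf_a x (Suc j) # map (cf_a x) (rev [1..<Suc j])) :: real)
      = of_int (cf_a x (Suc j)) + of_int (qq (cf_a x) (Suc j)) / of_int (qq (cf_a x) (Suc (Suc j)))"
    by (simp only: cf_val_cons0[of "cf_a x (Suc j)"] Suc.IH)
  also have "1 / (of_int (cf_a x (Suc j)) + of_int (qq (cf_a x) (Suc j)) / of_int (qq (cf_a x) (Suc (Suc j))))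
      = of_int (qq (cf_a x) (Suc (Suc j))) / (real_of_int (qq (cf_a x) (Suc (Suc (Suc j)))))"
    using Q by (simp add: qq_rec[of _ "Suc j"] field_simps)
  finally show ?case .
qed

lemma lambda_formula:
  assumes x: "x \<notin> \<rat>"
  shows "cf_lambda x (Suc j) = DD x j / of_int (qq (cf_a x) (Suc (Suc j)))"
proof -
  have Q: "real_of_int (qq (cf_a x) (Suc (Suc j))) \<ge> 1" using Qpos[OF x, of j] by simp
  show ?thesis unfolding cf_lambda_def lambda_part[OF x] DD_def
    using Q by (simp add: field_simps)
qed



lemma abs_add_same_sign: "(A::real) * B \<ge> 0 \<Longrightarrow> \<bar>A + B\<bar> \<ge> \<bar>A\<bar>"
  by (cases "A \<ge> 0"; cases "B \<ge> 0") (auto simp: zero_le_mult_iff)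

lemma best_approx:
  assumes x: "x \<notin> \<rat>" and q0: "0 < q" and q1: "q < qq (cf_a x) (Suc (Suc (Suc j)))"
  shows "\<bar>of_int q * x - of_int p\<bar> \<ge> \<bar>of_int (qq (cf_a x) (Suc (Suc j))) * x - of_int (pp (cf_a x) (Suc (Suc j)))\<bar>"
proof -
  define P where "P = pp (cf_a x) (Suc (Suc j))"
  define Q where "Q = qq (cf_a x) (Suc (Suc j))"
  define P1 where "P1 = pp (cf_a x) (Suc (Suc (Suc j)))"
  define Q1 where "Q1 = qq (cf_a x) (Suc (Suc (Suc j)))"
  define e where "e = of_int Q * x - of_int P"
  define e1 where "e1 = of_int Q1 * x - of_int P1"
  define \<Delta> where "\<Delta> = P * Q1 - P1 * Q"
  have det: "P1 * Q - P * Q1 = (-1) ^ Suc (Suc j)"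
    unfolding P_def Q_def P1_def Q1_def by (rule det_pq)
  have dd: "\<Delta> * \<Delta> = 1"
  proof -
    have "\<Delta> = - ((-1) ^ Suc (Suc j))" using det unfolding \<Delta>_def by simp
    then show ?thesis by (simp add: power_mult_distrib[symmetric] flip: power_add)
  qed
  define u where "u = (p * Q1 - q * P1) * \<Delta>"
  define v where "v = (P * q - Q * p) * \<Delta>"
  have hp: "p = u * P + v * P1"
  proof -
    have "u * P + v * P1 = (\<Delta> * \<Delta>) * p" unfolding u_def v_def \<Delta>_def by (simp add: algebra_simps)
    then show ?thesis using dd by simp
  qed
  have hq: "q = u * Q + v * Q1"
  proof -
    have "u * Q + v * Q1 = (\<Delta> * \<Delta>) * q" unfolding u_def v_def \<Delta>_def by (simp add: algebra_simps)
    then show ?thesis using dd by simp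
  qed
  have Qp: "Q \<ge> 1" unfolding Q_def using Qpos[OF x] by blast
  have Q1p: "Q1 \<ge> 1" unfolding Q1_def using Qpos[OF x, of "Suc j"] by simp
  have lin: "of_int q * x - of_int p = of_int u * e + of_int v * e1"
    unfolding e_def e1_def hp hq by (simp add: algebra_simps)
  have ee: "e * e1 < 0"
  proof -
    have "e = (-1) ^ j / DD x j" unfolding e_def P_def Q_def by (rule err_formula[OF x])
    moreover have "e1 = (-1) ^ Suc j / DD x (Suc j)" unfolding e1_def P1_def Q1_def by (rule err_formula[OF x])
    ultimately have "e * e1 = - (((-1) ^ j * (-1) ^ j) / (DD x j * DD x (Suc j)))" by simp
    also have "(-1::real) ^ j * (-1) ^ j = 1" by (simp flip: power_add)
    finally show ?thesis using DD_pos[OF x, of j] DD_pos[OF x, of "Suc j"] by simp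
  qed
  have u0: "u \<noteq> 0"
  proof
    assume "u = 0"
    then have "q = v * Q1" using hq by simp
    show False
    proof (cases "v \<le> 0")
      case True
      then have "v * Q1 \<le> 0" using Q1p by (simp add: mult_nonpos_nonneg)
      then show False using \<open>q = v * Q1\<close> q0 by simp
    next
      case False
      then have "v * Q1 \<ge> 1 * Q1" using Q1p by (intro mult_right_mono) auto
      then show False using \<open>q = v * Q1\<close> q1 unfolding Q1_def by simp
    qed
  qed
  have uv: "u * v \<le> 0"
  proof (rule ccontr)
    assume "\<not> u * v \<le> 0"
    then have "(u > 0 \<and> v > 0) \<or> (u < 0 \<and> v < 0)" by (metis not_le zero_less_mult_iff)
    then show False
    proof
      assume "u > 0 \<and> v > 0"
      then have "u * Q \<ge> 0" "v * Q1 \<ge> 1 * Q1" using Qp Q1p by (auto intro: mult_right_mono)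
      then show False using hq q1 unfolding Q1_def by simp
    next
      assume "u < 0 \<and> v < 0"
      then have "u * Q < 0" "v * Q1 < 0" using Qp Q1p by (auto simp: mult_neg_pos)
      then show False using hq q0 by simp
    qed
  qed
  have "(of_int u * e) * (of_int v * e1) = of_int (u * v) * (e * e1)" by (simp add: algebra_simps)
  also have "\<dots> \<ge> 0"
  proof (rule mult_nonpos_nonpos)
    show "real_of_int (u * v) \<le> 0" unfolding of_int_le_0_iff by (rule uv)
    show "e * e1 \<le> 0" using ee by simp
  qed
  finally have "\<bar>of_int u * e + of_int v * e1\<bar> \<ge> \<bar>of_int u * e\<bar>" by (rule abs_add_same_sign)
  moreover have "\<bar>of_int u * e\<bar> \<ge> \<bar>e\<bar>"
  proof -
    have "\<bar>real_of_int u\<bar> \<ge> 1" using u0 by linarith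
    then have "\<bar>real_of_int u\<bar> * \<bar>e\<bar> \<ge> 1 * \<bar>e\<bar>" by (intro mult_right_mono) auto
    then show ?thesis by (simp add: abs_mult)
  qed
  ultimately show ?thesis unfolding lin e_def P_def Q_def by linarith
qed

lemma exists_bracket:
  assumes x: "x \<notin> \<rat>" and q: "q \<ge> 1"
  shows "\<exists>j. qq (cf_a x) (Suc (Suc j)) \<le> q \<and> q < qq (cf_a x) (Suc (Suc (Suc j)))"
proof -
  define S where "S = {m. q < qq (cf_a x) (Suc (Suc m))}"
  have "Suc (nat q) \<in> S"
    using qq_grow[of "cf_a x" "nat q"] cf_a_pos[OF x] q unfolding S_def by fastforce
  then have ne: "\<exists>m. m \<in> S" by blast
  define m where "m = (LEAST m. m \<in> S)"
  have mS: "m \<in> S" unfolding m_def using ne by (metis LeastI)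
  have m0: "m \<noteq> 0"
  proof
    assume "m = 0"
    then have "q < qq (cf_a x) (Suc (Suc 0))" using mS unfolding S_def by simp
    then show False using q by (simp add: qq_rec)
  qed
  then obtain j where j: "m = Suc j" by (cases m) auto
  have "j \<notin> S" using not_less_Least[of j "\<lambda>m. m \<in> S"] j unfolding m_def by simp
  then have "qq (cf_a x) (Suc (Suc j)) \<le> q" unfolding S_def by simp
  moreover have "q < qq (cf_a x) (Suc (Suc (Suc j)))" using mS j unfolding S_def by simp
  ultimately show ?thesis by blast
qed

lemma legendre:
  assumes x: "x \<notin> \<rat>" and cop: "coprime p q" and q: "q \<ge> 1"
    and close: "\<bar>of_int q * x - of_int p\<bar> < 1 / (2 * of_int q)"
  shows "\<exists>j. p = pp (cf_a x) (Suc (Suc j)) \<and> q = qq (cf_a x) (Suc (Suc j))"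
proof -
  obtain j where j: "qq (cf_a x) (Suc (Suc j)) \<le> q" "q < qq (cf_a x) (Suc (Suc (Suc j)))"
    using exists_bracket[OF x q] by blast
  define P where "P = pp (cf_a x) (Suc (Suc j))"
  define Q where "Q = qq (cf_a x) (Suc (Suc j))"
  have Qp: "Q \<ge> 1" unfolding Q_def using Qpos[OF x] by blast
  have ba: "\<bar>of_int Q * x - of_int P\<bar> \<le> \<bar>of_int q * x - of_int p\<bar>"
    unfolding P_def Q_def by (rule best_approx[OF x _ j(2)]) (use q in simp)
  show ?thesis
  proof (rule ccontr)
    assume nc: "\<not> ?thesis"
    have ne: "p * Q - q * P \<noteq> 0"
    proof
      assume "p * Q - q * P = 0"
      then have eq: "p * Q = P * q" by (simp add: mult.commute)
      have "q = Q"
        by (rule frac_unique[OF cop _ _ _ eq]) (use q Qp in \<open>auto simp: P_def Q_def coprime_pq\<close>)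
      then have "p = P" using eq Qp by simp
      then show False using nc \<open>q = Q\<close> unfolding P_def Q_def by blast
    qed
    then have "\<bar>real_of_int (p * Q - q * P)\<bar> \<ge> 1" by linarith
    moreover have "real_of_int (p * Q - q * P) = of_int Q * (of_int p - of_int q * x) + of_int q * (of_int Q * x - of_int P)"
      by (simp add: algebra_simps)
    ultimately have "1 \<le> \<bar>of_int Q * (of_int p - of_int q * x) + of_int q * (of_int Q * x - of_int P)\<bar>" by simp
    also have "\<dots> \<le> of_int Q * \<bar>of_int q * x - of_int p\<bar> + of_int q * \<bar>of_int Q * x - of_int P\<bar>"
      using Qp q by (simp add: abs_triangle_ineq[THEN order_trans] abs_mult abs_minus_commute)
    also have "\<dots> < of_int Q * (1 / (2 * of_int q)) + of_int q * (1 / (2 * of_int q))"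
    proof -
      have "of_int Q * \<bar>of_int q * x - of_int p\<bar> < of_int Q * (1 / (2 * of_int q))"
        using Qp close by (intro mult_strict_left_mono) auto
      moreover have "of_int q * \<bar>of_int Q * x - of_int P\<bar> \<le> of_int q * (1 / (2 * of_int q))"
        using q ba close by (intro mult_left_mono) auto
      ultimately show ?thesis by linarith
    qed
    also have "\<dots> \<le> 1"
    proof -
      have "real_of_int Q \<le> of_int q" using j(1) unfolding Q_def by simp
      then have "of_int Q * (1 / (2 * of_int q)) \<le> (1::real) / 2" using q by (simp add: field_simps)
      moreover have "of_int q * (1 / (2 * of_int q)) = (1::real) / 2" using q by simp
      ultimately show ?thesis by linarith
    qed
    finally show False by simp
  qed
qed



lemma exp_ge_S6: "(x::real) \<ge> 0 \<Longrightarrow> exp x \<ge> 1 + x + x^2/2 + x^3/6 + x^4/24 + x^5/120 + x^6/720"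
proof -
  assume x: "x \<ge> 0"
  obtain t where t: "exp x = (\<Sum>m<7. (x ^ m) / fact m) + (exp t / fact 7) * x ^ 7"
    using Maclaurin_exp_le[of x 7] by blast
  have "(exp t / fact 7) * x ^ 7 \<ge> 0" using x by simp
  moreover have "(\<Sum>m<7. (x ^ m) / fact m) = 1 + x + x^2/2 + x^3/6 + x^4/24 + x^5/120 + x^6/720"
    by (simp add: eval_nat_numeral fact_numeral)
  ultimately show ?thesis using t by linarith
qed

lemma exp_neg_ge_T5: "(x::real) \<ge> 0 \<Longrightarrow> exp (-x) \<ge> 1 - x + x^2/2 - x^3/6 + x^4/24 - x^5/120"
proof -
  assume x: "x \<ge> 0"
  obtain t where t: "exp (-x) = (\<Sum>m<6. ((-x) ^ m) / fact m) + (exp t / fact 6) * (-x) ^ 6"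
    using Maclaurin_exp_le[of "-x" 6] by blast
  have "(exp t / fact 6) * (-x) ^ 6 \<ge> 0" by simp
  moreover have "(\<Sum>m<6. ((-x) ^ m) / fact m) = 1 - x + x^2/2 - x^3/6 + x^4/24 - x^5/120"
    by (simp add: eval_nat_numeral fact_numeral)
  ultimately show ?thesis using t by linarith
qed

lemma exp_upper:
  fixes x :: real assumes x: "x > 0"
  shows "1 / (exp x - 1) < 1 / x - 1/2 + x / 12"
proof -
  define S where "S = 1 + x + x^2/2 + x^3/6 + x^4/24 + x^5/120 + x^6/720"
  define q where "q = x^2 - 6*x + 12"
  have q: "q > 0"
  proof -
    have "q = (x - 3)^2 + 3" unfolding q_def by (simp add: power2_eq_square algebra_simps)
    then show ?thesis by (simp add: add_nonneg_pos)
  qed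
  have E: "exp x \<ge> S" unfolding S_def using exp_ge_S6 x by simp
  define S7 where "S7 = 720 + 720*x + 360*x^2 + 120*x^3 + 30*x^4 + 6*x^5 + x^6"
  have SS: "S = S7 / 720" unfolding S_def S7_def by (simp add: field_simps)
  have id0: "(S7 - 720) * q - 8640 * x = 12 * x^5 + 6 * x^6 + x^8"
    unfolding S7_def q_def by algebra
  have id: "(S - 1) * q - 12 * x = x^5/60 + x^6/120 + x^8/720"
  proof -
    have "(S - 1) * q - 12 * x = ((S7 - 720) * q - 8640 * x) / 720" unfolding SS by (simp add: field_simps)
    then show ?thesis unfolding id0 by simp
  qed
  have "x^5/60 + x^6/120 + x^8/720 > 0" using x by (simp add: add_pos_nonneg)
  then have "12 * x < (S - 1) * q" using id by linarith
  also have "(S - 1) * q \<le> (exp x - 1) * q" using E q by (intro mult_right_mono) auto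
  finally have key: "12 * x < (exp x - 1) * q" .
  have ex: "exp x - 1 > 0" using x by simp
  have "1 / (exp x - 1) < q / (12 * x)"
    using key ex x by (simp add: field_simps)
  also have "q / (12 * x) = 1 / x - 1/2 + x / 12"
    unfolding q_def using x by (simp add: field_simps power2_eq_square)
  finally show ?thesis .
qed

lemma exp_lower:
  fixes x :: real assumes x: "x > 0"
  shows "1 / x - 1/2 < 1 / (exp x - 1)"
proof (cases "x < 2")
  case False
  then have "1 / x \<le> 1/2" using x by (simp add: field_simps)
  moreover have "1 / (exp x - 1) > 0" using x by simp
  ultimately show ?thesis by linarith
next
  case True
  define T where "T = 1 - x + x^2/2 - x^3/6 + x^4/24 - x^5/120"
  have E: "exp (-x) \<ge> T" unfolding T_def using exp_neg_ge_T5 x by simp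
  define T7 where "T7 = 120 - 120*x + 60*x^2 - 20*x^3 + 5*x^4 - x^5"
  have TT: "T = T7 / 120" unfolding T_def T7_def by (simp add: field_simps)
  have id0: "(2 + x) * T7 - 120 * (2 - x) = x^3 * (20 - 10 * x + x^2 * (3 - x))"
    unfolding T7_def by algebra
  have id: "(2 + x) * T - (2 - x) = x^3 * (20 - 10 * x + x^2 * (3 - x)) / 120"
  proof -
    have "(2 + x) * T - (2 - x) = ((2 + x) * T7 - 120 * (2 - x)) / 120" unfolding TT by (simp add: field_simps)
    then show ?thesis unfolding id0 by simp
  qed
  have "x^2 * (3 - x) > 0" using x True by simp
  then have "20 - 10 * x + x^2 * (3 - x) > 0" using True by linarith
  then have "x^3 * (20 - 10 * x + x^2 * (3 - x)) / 120 > 0" using x by simp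
  then have "2 - x < (2 + x) * T" using id by linarith
  also have "\<dots> \<le> (2 + x) * exp (-x)" using E x by (intro mult_left_mono) auto
  finally have k1: "2 - x < (2 + x) * exp (-x)" .
  have "(2 - x) * exp x < (2 + x) * exp (-x) * exp x"
    using k1 by (intro mult_strict_right_mono) auto
  also have "\<dots> = 2 + x" by (simp add: exp_minus field_simps)
  finally have key: "(2 - x) * exp x < 2 + x" .
  have ex: "exp x - 1 > 0" using x by simp
  have "1 / x - 1/2 = (2 - x) / (2 * x)" using x by (simp add: field_simps)
  also have "\<dots> < 1 / (exp x - 1)" using key ex x by (simp add: field_simps)
  finally show ?thesis .
qed



theorem mainTheorem12:
  fixes \<theta> :: real and n :: nat
  assumes "1 < \<theta>" and "\<theta> < exp 3"
    and "ln \<theta> \<notin> \<rat>"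
    and "n \<in> A_set \<theta>"
  shows "\<exists>c k :: nat. c > 0 \<and> k > 0 \<and>
           int n = int c * cf_B (2 / ln \<theta>) (2 * k - 1) \<and>
           cf_lambda (2 / ln \<theta>) (2 * k) > 6 * (real c)^2 / ln \<theta>"
proof -
  define L where "L = ln \<theta>"
  define \<alpha> where "\<alpha> = 2 / L"
  have L0: "L > 0" unfolding L_def using assms(1) by simp
  have L3: "L < 3" unfolding L_def using assms(1,2) by (metis ln_exp ln_less_cancel_iff less_trans zero_less_one)
  have Lirr: "L \<notin> \<rat>" unfolding L_def using assms(3) .
  have airr: "\<alpha> \<notin> \<rat>"
  proof
    assume "\<alpha> \<in> \<rat>"
    then have "2 / \<alpha> \<in> \<rat>" by (intro Rats_divide) auto
    then show False using Lirr L0 unfolding \<alpha>_def by simp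
  qed
  have n1: "n \<ge> 1" and Mne: "M' \<theta> n \<noteq> \<lfloor>real n / ln \<theta> - 1/2\<rfloor>"
    using assms(4) unfolding A_set_def by auto
  define xx where "xx = L / real n"
  have xx0: "xx > 0" unfolding xx_def using L0 n1 by simp
  have pw: "\<theta> powr (1 / real n) = exp xx"
    unfolding xx_def L_def using assms(1) by (simp add: powr_def)
  define y where "y = 1 / (exp xx - 1)"
  have ixx: "1 / xx = real n / L" unfolding xx_def by simp
  have ylo: "real n / L - 1/2 < y" unfolding y_def using exp_lower[OF xx0] ixx by simp
  have yhi: "y < real n / L - 1/2 + xx / 12" unfolding y_def using exp_upper[OF xx0] ixx by simp
  define f1 where "f1 = \<lfloor>y\<rfloor>"
  define f2 where "f2 = \<lfloor>real n / L - 1/2\<rfloor>"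
  have "f1 \<ge> f2" unfolding f1_def f2_def using ylo by (intro floor_mono) simp
  moreover have "f1 \<noteq> f2" using Mne unfolding f1_def f2_def M'_def y_def pw L_def by simp
  ultimately have "f1 \<ge> f2 + 1" by simp
  moreover have "real_of_int f2 + 1 > real n / L - 1/2" unfolding f2_def by linarith
  ultimately have f1lo: "real_of_int f1 > real n / L - 1/2" by linarith
  have f1hi: "real_of_int f1 \<le> y" unfolding f1_def by simp
  define p where "p = 2 * f1 + 1"
  define \<delta> where "\<delta> = real_of_int p - real n * \<alpha>"
  have na: "real n * \<alpha> = 2 * (real n / L)" unfolding \<alpha>_def by simp
  have d0: "\<delta> > 0" unfolding \<delta>_def p_def na using f1lo by simp
  have d1: "\<delta> < L / (6 * real n)"
  proof -
    have "\<delta> < xx / 6" unfolding \<delta>_def p_def na using f1hi yhi by simp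
    then show ?thesis unfolding xx_def by simp
  qed
  have "real n / L > 0" using L0 n1 by simp
  then have "real_of_int f1 > -1/2" using f1lo by linarith
  then have f1nn: "f1 \<ge> 0" by linarith
  then have p1: "p \<ge> 1" unfolding p_def by simp
  define g where "g = gcd p (int n)"
  have g0: "g > 0" unfolding g_def using p1 by simp
  define p' where "p' = p div g"
  define q' where "q' = int n div g"
  have pg: "p = g * p'" unfolding p'_def g_def by simp
  have ng: "int n = g * q'" unfolding q'_def g_def by simp
  have cop: "coprime p' q'" unfolding p'_def q'_def g_def
    by (rule div_gcd_coprime) (use p1 in simp)
  have q'1: "q' \<ge> 1"
  proof (rule ccontr)
    assume "\<not> q' \<ge> 1"
    then have "q' \<le> 0" by simp
    then have "g * q' \<le> 0" using g0 by (intro mult_nonneg_nonpos) auto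
    then show False using ng n1 by simp
  qed
  have gr: "real_of_int g \<ge> 1" using g0 by simp
  have eq1: "real_of_int q' * \<alpha> - real_of_int p' = - \<delta> / of_int g"
  proof -
    have "real_of_int p = of_int g * of_int p'" using pg by simp
    moreover have "real n = of_int g * of_int q'" using ng by (metis of_int_mult of_int_of_nat_eq)
    ultimately show ?thesis unfolding \<delta>_def using gr by (simp add: field_simps)
  qed
  have nreal: "real n = of_int g * of_int q'" using ng by (metis of_int_mult of_int_of_nat_eq)
  have close_g: "\<delta> / of_int g < L / (6 * of_int g ^ 2 * of_int q')"
  proof -
    have "\<delta> / of_int g < (L / (6 * real n)) / of_int g" using divide_strict_right_mono[OF d1, of "real_of_int g"] gr by simp
    also have "\<dots> = L / (6 * of_int g ^ 2 * of_int q')" unfolding nreal by (simp add: power2_eq_square field_simps)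
    finally show ?thesis .
  qed
  have "L / (6 * of_int g ^ 2 * of_int q') \<le> 1 / (2 * of_int q')"
  proof -
    have "real_of_int g ^ 2 \<ge> 1" using gr by (simp add: one_le_power)
    then have "L \<le> 3 * of_int g ^ 2" using L3 by linarith
    moreover have "real_of_int q' \<ge> 1" using q'1 by simp
    ultimately show ?thesis using gr by (simp add: field_simps)
  qed
  with close_g have close: "\<bar>real_of_int q' * \<alpha> - real_of_int p'\<bar> < 1 / (2 * of_int q')"
    unfolding eq1 using d0 gr by simp
  obtain j where j: "p' = pp (cf_a \<alpha>) (Suc (Suc j))" "q' = qq (cf_a \<alpha>) (Suc (Suc j))"
    using legendre[OF airr cop q'1 close] by blast
  have err: "real_of_int q' * \<alpha> - real_of_int p' = (-1) ^ j / DD \<alpha> j"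
    unfolding j by (rule err_formula[OF airr])
  have Dp: "DD \<alpha> j > 0" by (rule DD_pos[OF airr])
  have "\<delta> / of_int g > 0" using d0 gr by simp
  then have "(-1::real) ^ j / DD \<alpha> j < 0" using err eq1 by linarith
  then have "(-1::real) ^ j < 0" using Dp by (simp add: divide_less_0_iff)
  then have oj: "odd j" by (metis neg_one_even_power not_less zero_le_one)
  define k where "k = Suc j div 2"
  have jk: "2 * k - 1 = j" "2 * k = Suc j" unfolding k_def using oj by auto
  have k0: "k > 0" unfolding k_def using oj by auto
  define c where "c = nat g"
  have cg: "int c = g" unfolding c_def using g0 by simp
  have c0: "c > 0" unfolding c_def using g0 by simp
  have B: "cf_B \<alpha> (2 * k - 1) = q'" unfolding jk(1) j cf_B_eq[OF airr] ..
  have lam: "cf_lambda \<alpha> (2 * k) = DD \<alpha> j / of_int q'" unfolding jk(2) j lambda_formula[OF airr] ..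
  have "1 / DD \<alpha> j < L / (6 * of_int g ^ 2 * of_int q')"
  proof -
    have "\<bar>(-1::real) ^ j / DD \<alpha> j\<bar> = 1 / DD \<alpha> j" using Dp by simp
    moreover have "\<bar>real_of_int q' * \<alpha> - real_of_int p'\<bar> = \<delta> / of_int g" unfolding eq1 using d0 gr by simp
    ultimately show ?thesis using err close_g by simp
  qed
  then have "6 * of_int g ^ 2 * of_int q' / L < DD \<alpha> j"
    using Dp L0 gr q'1 by (simp add: field_simps)
  then have "6 * of_int g ^ 2 / L < DD \<alpha> j / of_int q'"
    using q'1 L0 by (simp add: field_simps)
  then have "cf_lambda \<alpha> (2 * k) > 6 * (real c)^2 / L" unfolding lam
    using cg by (metis of_int_of_nat_eq)
  moreover have "int n = int c * cf_B \<alpha> (2 * k - 1)" unfolding B cg using ng .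
  ultimately show ?thesis using c0 k0 unfolding \<alpha>_def L_def by blast
qed


end
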